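(* Let $P, Q \subseteq \mathbb{R}^d$ be full-dimensional semi-rational polytopes such that $L_{P+w}(s) = L_{Q+w}(s)$ for all $w \in \mathbb{Z}^d$ and all real $s > 0$. Then $P = Q$.
   Context: For a polytope $P \subseteq \mathbb{R}^d$ and real $s \ge 0$, $L_P(s) = \#(sP \cap \mathbb{Z}^d)$, where $sP = \{sx : x \in P\}$. A polytope is semi-rational if it can be written as $\bigcap_{i=1}^n \{x \in \mathbb{R}^d : \langle a_i, x\rangle \le b_i\}$ with all $a_i \in \mathbb{Z}^d$ and all $b_i \in \mathbb{R}$. *)

theory Defs
  imports "HOL-Analysis.Analysis"
begin

definition int_points :: "(real ^ 'n) set" where
  "int_points = {x. \<forall>i. x $ i \<in> \<int>}"

definition lattice_count :: "(real ^ 'n) set \<Rightarrow> real \<Rightarrow> nat" where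
  "lattice_count P s = card ((\<lambda>x. s *\<^sub>R x) ` P \<inter> int_points)"

definition semi_rational :: "(real ^ 'n) set \<Rightarrow> bool" where
  "semi_rational P \<longleftrightarrow> polytope P \<and>
     (\<exists>H :: ((real ^ 'n) \<times> real) set. finite H \<and> (\<forall>(a, b) \<in> H. a \<in> int_points) \<and>
        P = {x. \<forall>(a, b) \<in> H. a \<bullet> x \<le> b})"

definition full_dimensional :: "(real ^ 'n) set \<Rightarrow> bool" where
  "full_dimensional P \<longleftrightarrow> aff_dim P = int CARD('n)"

end

theory Submission
  imports Defs
begin

lemma full_dim_interior:
  fixes P :: "(real ^ 'n) set"
  assumes "convex P" "full_dimensional P"
  shows "interior P \<noteq> {}"
proof -
  have a: "aff_dim P = int DIM(real ^ 'n)" using assms(2) by (simp add: full_dimensional_def)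
  hence "P \<noteq> {}" by auto
  hence "rel_interior P \<noteq> {}" using assms(1) by (simp add: rel_interior_eq_empty)
  thus ?thesis using a interior_rel_interior_gen by metis
qed

lemma open_ball_in_diff:
  fixes P Q :: "(real ^ 'n) set"
  assumes "convex P" "interior P \<noteq> {}" "closed Q" "p \<in> P" "p \<notin> Q"
  shows "\<exists>y r. r > 0 \<and> ball y r \<subseteq> P - Q"
proof -
  have "open (- Q)" using assms(3) by (simp add: open_Compl)
  moreover have "p \<in> - Q" using assms(5) by simp
  ultimately obtain e where e0: "e > 0" "ball p e \<subseteq> - Q" using open_contains_ball by blast
  hence e: "e > 0" "ball p e \<inter> Q = {}" by auto
  have "p \<in> closure (interior P)" using convex_closure_interior[OF assms(1,2)] assms(4) closure_subset by auto
  then obtain y where y: "y \<in> interior P" "dist y p < e" using e(1) closure_approachable by metis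
  obtain r1 where r1: "r1 > 0" "ball y r1 \<subseteq> P" using y(1) mem_interior by blast
  define r where "r = min r1 (e - dist y p)"
  have "r > 0" using r1 y e by (simp add: r_def)
  moreover have "ball y r \<subseteq> P - Q"
  proof
    fix z assume z: "z \<in> ball y r"
    have "z \<in> P" using z r1 by (auto simp: r_def)
    moreover have "dist p z < e" using z dist_triangle[of p z y] by (auto simp: r_def dist_commute)
    ultimately show "z \<in> P - Q" using e(2) by auto
  qed
  ultimately show ?thesis by blast
qed

lemma rational_in_ball:
  fixes y :: "real ^ 'n"
  assumes "r > 0"
  shows "\<exists>q::nat. \<exists>a. q \<ge> 1 \<and> a \<in> int_points \<and> (1 / real q) *\<^sub>R a \<in> ball y r"
proof -
  obtain q :: nat where q: "real q > real CARD('n) / r" using reals_Archimedean2 by blast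
  have q1: "q \<ge> 1"
  proof (rule ccontr)
    assume "\<not> q \<ge> 1" hence "q = 0" by auto
    moreover have "real CARD('n) / r \<ge> 0" using assms by simp
    ultimately show False using q by simp
  qed
  define a :: "real ^ 'n" where "a = (\<chi> i. of_int \<lfloor>real q * y $ i\<rfloor>)"
  have ai: "a \<in> int_points" by (simp add: a_def int_points_def)
  have comp: "\<bar>((1 / real q) *\<^sub>R a - y) $ i\<bar> \<le> 1 / real q" for i
  proof -
    have qp: "real q > 0" using q1 by simp
    have "((1 / real q) *\<^sub>R a - y) $ i = (of_int \<lfloor>real q * y $ i\<rfloor> - real q * y $ i) / real q"
      using qp by (simp add: a_def field_simps)
    moreover have "\<bar>of_int \<lfloor>real q * y $ i\<rfloor> - real q * y $ i\<bar> \<le> 1"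
      by (smt (verit) of_int_floor_le real_of_int_floor_add_one_gt)
    ultimately show ?thesis using qp by (simp add: abs_div_pos divide_right_mono)
  qed
  have "norm ((1 / real q) *\<^sub>R a - y) \<le> (\<Sum>i\<in>UNIV. \<bar>((1 / real q) *\<^sub>R a - y) $ i\<bar>)"
    by (rule norm_le_l1_cart)
  also have "\<dots> \<le> (\<Sum>i\<in>(UNIV::'n set). 1 / real q)" by (rule sum_mono) (rule comp)
  also have "\<dots> = real CARD('n) / real q" by simp
  also have "\<dots> < r" using q assms q1 by (simp add: field_simps)
  finally have "dist y ((1 / real q) *\<^sub>R a) < r" by (simp add: dist_norm norm_minus_commute)
  thus ?thesis using q1 ai by auto
qed


lemma key:
  fixes P Q :: "(real ^ 'n) set"
  assumes bP: "P \<subseteq> cball 0 R" and bQ: "Q \<subseteq> cball 0 R"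
    and q1: "(q::nat) \<ge> 1" and ai: "a \<in> int_points"
    and xP: "(1 / real q) *\<^sub>R a \<in> P" and xQ: "(1 / real q) *\<^sub>R a \<notin> Q"
  shows "\<exists>w s. w \<in> int_points \<and> s > 0 \<and>
           lattice_count ((\<lambda>x. x + w) ` P) s \<noteq> lattice_count ((\<lambda>x. x + w) ` Q) s"
proof -
  define x where "x = (1 / real q) *\<^sub>R a"
  obtain M :: nat where M: "real M > 2 * R" using reals_Archimedean2 by blast
  define t where "t = real M + 1 / real q"
  define s where "s = 1 / t"
  define w where "w = real M *\<^sub>R a"
  have qp: "real q > 0" using q1 by simp
  have tp: "t > real M" using qp by (simp add: t_def)
  have Mge: "real M \<ge> 0" by simp
  have tpos: "t > 0" using tp Mge by linarith
  have sp: "s > 0" using tpos by (simp add: s_def)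
  have wi: "w \<in> int_points" using ai
    by (simp add: w_def int_points_def)
  have xw: "x + w = t *\<^sub>R a"
    by (simp add: x_def w_def t_def algebra_simps)
  have uniq: "z = a" if pS: "p \<in> cball 0 R" "x \<in> cball 0 R" and z: "z \<in> int_points"
      and zp: "z = s *\<^sub>R (p + w)" for p z
  proof (rule ccontr)
    assume "z \<noteq> a"
    then obtain i where i: "z $ i \<noteq> a $ i" by (metis vec_eq_iff)
    have zi: "z $ i \<in> \<int>" "a $ i \<in> \<int>" using z ai by (auto simp: int_points_def)
    have ge1: "\<bar>z $ i - a $ i\<bar> \<ge> 1"
    proof -
      obtain m where m: "z $ i - a $ i = of_int m" using zi by (metis Ints_cases Ints_diff)
      have "m \<noteq> 0" using m i by auto
      hence "\<bar>of_int m :: real\<bar> \<ge> 1" by linarith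
      thus ?thesis using m by simp
    qed
    have "p + w = t *\<^sub>R z" using zp tpos by (simp add: s_def)
    moreover have "p - x = (p + w) - (x + w)" by simp
    ultimately have "p - x = t *\<^sub>R z - t *\<^sub>R a" using xw by simp
    hence "p - x = t *\<^sub>R (z - a)" by (simp add: scaleR_right_diff_distrib)
    hence "\<bar>(p - x) $ i\<bar> = t * \<bar>z $ i - a $ i\<bar>" using tpos by (simp add: abs_mult)
    also have "\<dots> \<ge> t" using ge1 tpos by (metis mult.right_neutral mult_left_mono less_imp_le)
    finally have c1: "\<bar>(p - x) $ i\<bar> \<ge> t" .
    have "\<bar>(p - x) $ i\<bar> \<le> norm (p - x)" by (rule component_le_norm_cart)
    also have "\<dots> \<le> norm p + norm x" by (rule norm_triangle_ineq4)
    also have "\<dots> \<le> 2 * R" using pS by simp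
    finally show False using c1 tp M by linarith
  qed
  have xc: "x \<in> cball 0 R" using xP bP by (auto simp: x_def)
  have img: "z \<in> (\<lambda>y. s *\<^sub>R y) ` ((\<lambda>y. y + w) ` S) \<longleftrightarrow> (\<exists>p\<in>S. z = s *\<^sub>R (p + w))" for z S
    by auto
  have ax: "s *\<^sub>R (x + w) = a" using xw tpos by (simp add: s_def)
  have SP: "(\<lambda>y. s *\<^sub>R y) ` ((\<lambda>y. y + w) ` P) \<inter> int_points = {a}"
  proof
    show "{a} \<subseteq> (\<lambda>y. s *\<^sub>R y) ` ((\<lambda>y. y + w) ` P) \<inter> int_points"
    proof -
      have "x + w \<in> (\<lambda>y. y + w) ` P" using xP by (simp add: x_def)
      hence "a \<in> (\<lambda>y. s *\<^sub>R y) ` ((\<lambda>y. y + w) ` P)" by (rule image_eqI[where f="\<lambda>y. s *\<^sub>R y" and x="x + w", OF ax[symmetric]])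
      thus ?thesis using ai by simp
    qed
    show "(\<lambda>y. s *\<^sub>R y) ` ((\<lambda>y. y + w) ` P) \<inter> int_points \<subseteq> {a}"
    proof
      fix z assume z: "z \<in> (\<lambda>y. s *\<^sub>R y) ` ((\<lambda>y. y + w) ` P) \<inter> int_points"
      then obtain p where p: "p \<in> P" "z = s *\<^sub>R (p + w)" by blast
      have "p \<in> cball 0 R" using p(1) bP by blast
      hence "z = a" using uniq[OF _ xc _ p(2)] z by blast
      thus "z \<in> {a}" by simp
    qed
  qed
  have SQ: "(\<lambda>y. s *\<^sub>R y) ` ((\<lambda>y. y + w) ` Q) \<inter> int_points = {}"
  proof -
    { fix p assume p: "p \<in> Q" "s *\<^sub>R (p + w) \<in> int_points"
      have "s *\<^sub>R (p + w) = a" using uniq[OF _ xc p(2) refl] p bQ by auto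
      hence "s *\<^sub>R (p + w) = s *\<^sub>R (x + w)" using ax by simp
      hence "p + w = x + w" using sp by simp
      hence "p = x" by simp
      hence False using p xQ by (simp add: x_def) }
    thus ?thesis by auto
  qed
  have "lattice_count ((\<lambda>x. x + w) ` P) s \<noteq> lattice_count ((\<lambda>x. x + w) ` Q) s"
    unfolding lattice_count_def using SP SQ by simp
  thus ?thesis using wi sp by blast
qed

lemma one_side:
  fixes P Q :: "(real ^ 'n) set"
  assumes "semi_rational P" and "semi_rational Q"
    and "full_dimensional P"
    and "\<And>w s. w \<in> int_points \<Longrightarrow> s > 0 \<Longrightarrow>
           lattice_count ((\<lambda>x. x + w) ` P) s = lattice_count ((\<lambda>x. x + w) ` Q) s"
  shows "P \<subseteq> Q"
proof (rule ccontr)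
  assume "\<not> P \<subseteq> Q"
  then obtain p where p: "p \<in> P" "p \<notin> Q" by blast
  have pP: "polytope P" "polytope Q" using assms(1,2) by (auto simp: semi_rational_def)
  have cP: "convex P" using polytope_imp_convex[OF pP(1)] .
  have clQ: "closed Q" using compact_imp_closed[OF polytope_imp_compact[OF pP(2)]] .
  have iP: "interior P \<noteq> {}" using full_dim_interior[OF cP assms(3)] .
  obtain y r where yr: "r > 0" "ball y r \<subseteq> P - Q" using open_ball_in_diff[OF cP iP clQ p(1,2)] by auto
  obtain q :: nat and a where qa: "q \<ge> 1" "a \<in> int_points" "(1 / real q) *\<^sub>R a \<in> ball y r"
    using rational_in_ball[OF yr(1), of y] by auto
  have "bounded P" "bounded Q" using compact_imp_bounded polytope_imp_compact pP by auto
  hence "bounded (P \<union> Q)" by (simp add: bounded_Un)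
  then obtain R where R0: "\<forall>x\<in>P \<union> Q. norm x \<le> R" unfolding bounded_iff by blast
  hence R: "P \<union> Q \<subseteq> cball 0 R" by (auto simp: mem_cball_0)
  have "\<exists>w s. w \<in> int_points \<and> s > 0 \<and>
           lattice_count ((\<lambda>x. x + w) ` P) s \<noteq> lattice_count ((\<lambda>x. x + w) ` Q) s"
  proof (rule key[OF _ _ qa(1,2)])
    show "P \<subseteq> cball 0 R" using R by blast
    show "Q \<subseteq> cball 0 R" using R by blast
    show "(1 / real q) *\<^sub>R a \<in> P" using yr(2) qa(3) by blast
    show "(1 / real q) *\<^sub>R a \<notin> Q" using yr(2) qa(3) by blast
  qed
  then obtain w s where ws: "w \<in> int_points" "s > 0"
    "lattice_count ((\<lambda>x. x + w) ` P) s \<noteq> lattice_count ((\<lambda>x. x + w) ` Q) s" by blast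
  thus False using assms(4)[OF ws(1,2)] by simp
qed

theorem corollary3p6:
  fixes P Q :: "(real ^ 'n) set"
  assumes "semi_rational P" and "semi_rational Q"
    and "full_dimensional P" and "full_dimensional Q"
    and "\<And>w s. w \<in> int_points \<Longrightarrow> s > 0 \<Longrightarrow>
           lattice_count ((\<lambda>x. x + w) ` P) s = lattice_count ((\<lambda>x. x + w) ` Q) s"
  shows "P = Q"
proof
  show "P \<subseteq> Q" by (rule one_side[OF assms(1,2,3)]) (rule assms(5))
  show "Q \<subseteq> P" by (rule one_side[OF assms(2,1,4)]) (rule sym, rule assms(5))
qed

end
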